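(* Let $p$ be an odd prime, let $W_p=U\rtimes C_p$ be the wreath product $C_2\wr C_p$, let $T$ be its center, and let $G=W_p/T=V\rtimes C$ where $V=U/T$ and $C$ is the image of $C_p$. Then the automorphism group $\mathrm{Aut}(G)$ acts transitively on $G\setminus V$.
   Context: Here $U=\mathbb{F}_2^{\,p}$ and a generator of the cyclic group $C_p$ of order $p$ acts on $U$ by cyclically permuting coordinates, and $W_p=U\rtimes C_p$. The center of $W_p$ is $T=\{(0,\dots,0),(1,\dots,1)\}\subseteq U$, so $V=U/T$ is an $\mathbb{F}_2$-vector space of dimension $p-1$ which is a normal subgroup of $G$, and $G=V\rtimes C$ with $C$ cyclic of order $p$. *)

theory Defs
  imports "HOL-Computational_Algebra.Primes" "HOL-Algebra.Coset"
begin

text \<open>U = F_2^p is modelled as the subsets of {0..<p} (indicator of the support),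
  with addition = symmetric difference.\<close>

definition symdiff :: "nat set \<Rightarrow> nat set \<Rightarrow> nat set" where
  "symdiff u v = (u - v) \<union> (v - u)"

definition cshift :: "nat \<Rightarrow> nat \<Rightarrow> nat set \<Rightarrow> nat set" where
  "cshift p a v = (\<lambda>i. (i + a) mod p) ` v"

definition wreath :: "nat \<Rightarrow> (nat set \<times> nat) monoid" where
  "wreath p = \<lparr>carrier = Pow {..<p} \<times> {..<p},
     mult = (\<lambda>(u, a) (v, b). (symdiff u (cshift p a v), (a + b) mod p)),
     one = ({}, 0)\<rparr>"

definition center :: "('a, 'b) monoid_scheme \<Rightarrow> 'a set" where
  "center G = {z \<in> carrier G. \<forall>g \<in> carrier G. z \<otimes>\<^bsub>G\<^esub> g = g \<otimes>\<^bsub>G\<^esub> z}"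

definition Gq :: "nat \<Rightarrow> (nat set \<times> nat) set monoid" where
  "Gq p = wreath p Mod center (wreath p)"

definition Vq :: "nat \<Rightarrow> (nat set \<times> nat) set set" where
  "Vq p = (\<lambda>x. center (wreath p) #>\<^bsub>wreath p\<^esub> x) ` (Pow {..<p} \<times> {0})"

end

theory Submission
  imports Defs "HOL-Number_Theory.Cong"
begin


lemma symdiff_mem: "x \<in> symdiff u v \<longleftrightarrow> (x \<in> u) \<noteq> (x \<in> v)"
  unfolding symdiff_def by auto

lemma symdiff_image:
  assumes "inj_on f A" "v \<subseteq> A" "w \<subseteq> A"
  shows "f ` (symdiff v w) = symdiff (f ` v) (f ` w)"
proof -
  have "f ` (v - w) = f ` v - f ` w" "f ` (w - v) = f ` w - f ` v"
    using assms by (auto dest: inj_onD)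
  then show ?thesis unfolding symdiff_def by (simp add: image_Un)
qed

lemma inj_shift: "inj_on (\<lambda>i. (i + a) mod p) {..<(p::nat)}"
proof (rule inj_onI)
  fix i j assume "i \<in> {..<p}" "j \<in> {..<p}" "(i + a) mod p = (j + a) mod p"
  then have "[i + a = j + a] (mod p)" by (simp add: cong_def)
  then have "[i = j] (mod p)" by (simp add: cong_add_rcancel_nat)
  then show "i = j" using \<open>i \<in> {..<p}\<close> \<open>j \<in> {..<p}\<close> by (simp add: cong_def)
qed

lemma cshift_sub: "0 < p \<Longrightarrow> cshift p a v \<subseteq> {..<p}"
  unfolding cshift_def by auto

lemma cshift_symdiff: "v \<subseteq> {..<p} \<Longrightarrow> w \<subseteq> {..<p} \<Longrightarrow>
   cshift p a (symdiff v w) = symdiff (cshift p a v) (cshift p a w)"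
  unfolding cshift_def by (rule symdiff_image[OF inj_shift])

lemma cshift_cshift: "cshift p a (cshift p b w) = cshift p ((a + b) mod p) w"
  unfolding cshift_def image_image
  by (rule image_cong) (auto simp: mod_simps ac_simps)

lemma cshift_0: "v \<subseteq> {..<p} \<Longrightarrow> cshift p 0 v = v"
  unfolding cshift_def by (auto simp: subset_iff image_iff)

lemma cshift_full: "0 < p \<Longrightarrow> cshift p a {..<p} = {..<p}"
proof -
  assume p: "0 < p"
  have "cshift p a {..<p} \<subseteq> {..<p}" using cshift_sub[OF p] .
  moreover have "card (cshift p a {..<p}) = p" unfolding cshift_def
    using card_image[OF inj_shift] by simp
  ultimately show ?thesis by (simp add: card_subset_eq)
qed

lemma symdiff_assoc: "symdiff (symdiff u v) w = symdiff u (symdiff v w)"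
  by (auto simp: symdiff_def)
lemma symdiff_comm: "symdiff u v = symdiff v u"
  by (auto simp: symdiff_def)
lemma symdiff_self[simp]: "symdiff u u = {}" by (auto simp: symdiff_def)
lemma symdiff_empty[simp]: "symdiff {} u = u" "symdiff u {} = u" by (auto simp: symdiff_def)
lemma symdiff_sub: "u \<subseteq> A \<Longrightarrow> v \<subseteq> A \<Longrightarrow> symdiff u v \<subseteq> A"
  by (auto simp: symdiff_def)

lemma wreath_carrier: "carrier (wreath p) = Pow {..<p} \<times> {..<p}"
  by (simp add: wreath_def)
lemma wreath_mult: "(u, a) \<otimes>\<^bsub>wreath p\<^esub> (v, b) = (symdiff u (cshift p a v), (a + b) mod p)"
  by (simp add: wreath_def)
lemma wreath_one: "\<one>\<^bsub>wreath p\<^esub> = ({}, 0)"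
  by (simp add: wreath_def)

lemma wreath_group: assumes p: "0 < p" shows "group (wreath p)"
proof (rule groupI)
  fix x y assume "x \<in> carrier (wreath p)" "y \<in> carrier (wreath p)"
  then show "x \<otimes>\<^bsub>wreath p\<^esub> y \<in> carrier (wreath p)"
    using p cshift_sub[OF p] by (cases x; cases y) (auto simp: wreath_carrier wreath_mult symdiff_def)
next
  show "\<one>\<^bsub>wreath p\<^esub> \<in> carrier (wreath p)" using p by (simp add: wreath_carrier wreath_one)
next
  fix x y z assume "x \<in> carrier (wreath p)" "y \<in> carrier (wreath p)" "z \<in> carrier (wreath p)"
  then obtain u a v b w c where xyz: "x = (u,a)" "y = (v,b)" "z = (w,c)"
    and s: "u \<subseteq> {..<p}" "v \<subseteq> {..<p}" "w \<subseteq> {..<p}"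
    by (auto simp: wreath_carrier)
  have "cshift p a (symdiff v (cshift p b w)) = symdiff (cshift p a v) (cshift p ((a+b) mod p) w)"
    using s cshift_sub[OF p] by (simp add: cshift_symdiff cshift_cshift)
  then show "x \<otimes>\<^bsub>wreath p\<^esub> y \<otimes>\<^bsub>wreath p\<^esub> z = x \<otimes>\<^bsub>wreath p\<^esub> (y \<otimes>\<^bsub>wreath p\<^esub> z)"
    by (simp add: xyz wreath_mult symdiff_assoc mod_simps ac_simps)
next
  fix x assume "x \<in> carrier (wreath p)"
  then obtain u a where x: "x = (u,a)" "u \<subseteq> {..<p}" "a < p" by (auto simp: wreath_carrier)
  then show "\<one>\<^bsub>wreath p\<^esub> \<otimes>\<^bsub>wreath p\<^esub> x = x"
    by (simp add: wreath_one wreath_mult cshift_0)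
next
  fix x assume "x \<in> carrier (wreath p)"
  then obtain u a where x: "x = (u,a)" "u \<subseteq> {..<p}" "a < p" by (auto simp: wreath_carrier)
  let ?y = "(cshift p ((p - a) mod p) u, (p - a) mod p)"
  have "?y \<in> carrier (wreath p)" using p cshift_sub[OF p] by (auto simp: wreath_carrier)
  moreover have "?y \<otimes>\<^bsub>wreath p\<^esub> x = \<one>\<^bsub>wreath p\<^esub>"
    using x p by (simp add: wreath_mult wreath_one mod_simps)
  ultimately show "\<exists>y\<in>carrier (wreath p). y \<otimes>\<^bsub>wreath p\<^esub> x = \<one>\<^bsub>wreath p\<^esub>" by blast
qed



lemma (in group) center_normal: "center G \<lhd> G"
proof -
  let ?C = "center G"
  have sub: "subgroup ?C G"
  proof (rule subgroupI)
    show "?C \<subseteq> carrier G" by (auto simp: center_def)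
    show "?C \<noteq> {}" using one_closed by (auto simp: center_def)
  next
    fix a assume a: "a \<in> ?C"
    then have ac: "a \<in> carrier G" and com: "\<And>g. g \<in> carrier G \<Longrightarrow> a \<otimes> g = g \<otimes> a"
      by (auto simp: center_def)
    have "inv a \<otimes> g = g \<otimes> inv a" if g: "g \<in> carrier G" for g
    proof -
      have "inv a \<otimes> g = inv a \<otimes> (g \<otimes> a) \<otimes> inv a" using ac g by (simp add: m_assoc)
      also have "\<dots> = inv a \<otimes> (a \<otimes> g) \<otimes> inv a" using com g by simp
      also have "\<dots> = g \<otimes> inv a" using ac g by (simp add: m_assoc[symmetric])
      finally show ?thesis .
    qed
    then show "inv a \<in> ?C" using ac by (auto simp: center_def)
  next
    fix a b assume "a \<in> ?C" "b \<in> ?C"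
    then have ab: "a \<in> carrier G" "b \<in> carrier G"
      and ca: "\<And>g. g \<in> carrier G \<Longrightarrow> a \<otimes> g = g \<otimes> a"
      and cb: "\<And>g. g \<in> carrier G \<Longrightarrow> b \<otimes> g = g \<otimes> b" by (auto simp: center_def)
    have "a \<otimes> b \<otimes> g = g \<otimes> (a \<otimes> b)" if g: "g \<in> carrier G" for g
    proof -
      have "a \<otimes> b \<otimes> g = a \<otimes> (g \<otimes> b)" using ab g cb by (simp add: m_assoc)
      also have "\<dots> = (a \<otimes> g) \<otimes> b" using ab g by (simp add: m_assoc)
      also have "\<dots> = g \<otimes> (a \<otimes> b)" using ab g ca by (simp add: m_assoc)
      finally show ?thesis .
    qed
    then show "a \<otimes> b \<in> ?C" using ab by (auto simp: center_def)
  qed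
  have "x \<otimes> h \<otimes> inv x \<in> ?C" if "x \<in> carrier G" "h \<in> ?C" for x h
  proof -
    have "x \<otimes> h = h \<otimes> x" using that by (auto simp: center_def)
    then have "x \<otimes> h \<otimes> inv x = h \<otimes> x \<otimes> inv x" by simp
    also have "\<dots> = h" proof -
      have "h \<in> carrier G" using that(2) by (simp add: center_def)
      then show ?thesis using that(1) by (simp add: m_assoc)
    qed
    finally have "x \<otimes> h \<otimes> inv x = h" .
    then show ?thesis using that by simp
  qed
  then show ?thesis using sub by (simp add: normal_inv_iff)
qed

lemma (in group) center_image_sub:
  assumes f: "f \<in> iso G G" shows "f ` center G \<subseteq> center G"
proof
  fix y assume "y \<in> f ` center G"
  then obtain z where z: "z \<in> center G" "y = f z" by auto
  have hom: "f \<in> hom G G" and bij: "bij_betw f (carrier G) (carrier G)" using f by (auto simp: iso_def)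
  have zc: "z \<in> carrier G" using z by (auto simp: center_def)
  have "f z \<otimes> g = g \<otimes> f z" if g: "g \<in> carrier G" for g
  proof -
    obtain g' where g': "g' \<in> carrier G" "g = f g'" using bij g by (auto simp: bij_betw_def)
    have "f z \<otimes> f g' = f (z \<otimes> g')" using hom zc g' by (simp add: hom_mult)
    also have "\<dots> = f (g' \<otimes> z)" using z g' by (auto simp: center_def)
    also have "\<dots> = f g' \<otimes> f z" using hom zc g' by (simp add: hom_mult)
    finally show ?thesis using g' by simp
  qed
  moreover have "f z \<in> carrier G" using hom zc by (rule hom_in_carrier)
  ultimately show "y \<in> center G" using z by (auto simp: center_def)
qed

lemma (in group) center_image:
  assumes f: "f \<in> iso G G" shows "f ` center G = center G"
proof
  show "f ` center G \<subseteq> center G" by (rule center_image_sub[OF f])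
  let ?g = "inv_into (carrier G) f"
  have g: "?g \<in> iso G G" using iso_set_sym[OF f] .
  have inj: "inj_on f (carrier G)" using f by (auto simp: iso_def bij_betw_def)
  have Cc: "center G \<subseteq> carrier G" by (auto simp: center_def)
  have "center G = f ` (?g ` center G)"
  proof -
    have "center G \<subseteq> f ` carrier G" using f Cc by (auto simp: iso_def bij_betw_def)
    then show ?thesis by (simp add: image_inv_into_cancel)
  qed
  also have "\<dots> \<subseteq> f ` center G" using center_image_sub[OF g] by blast
  finally show "center G \<subseteq> f ` center G" .
qed

lemma (in group) image_rcos:
  assumes f: "f \<in> iso G G" and x: "x \<in> carrier G"
  shows "f ` (center G #> x) = center G #> f x"
proof -
  have hom: "f \<in> hom G G" using f by (auto simp: iso_def)
  have Cc: "center G \<subseteq> carrier G" by (auto simp: center_def)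
  have "f ` (center G #> x) = (\<lambda>h. f (h \<otimes> x)) ` center G"
    unfolding r_coset_def by auto
  also have "\<dots> = (\<lambda>h. f h \<otimes> f x) ` center G"
    using hom x Cc by (intro image_cong) (auto simp: hom_mult)
  also have "\<dots> = (f ` center G) #> f x" unfolding r_coset_def by auto
  finally show ?thesis using center_image[OF f] by simp
qed

lemma (in group) quotient_iso:
  assumes f: "f \<in> iso G G"
  shows "(\<lambda>X. f ` X) \<in> iso (G Mod center G) (G Mod center G)"
proof -
  let ?C = "center G"
  interpret N: normal ?C G by (rule center_normal)
  let ?g = "inv_into (carrier G) f"
  have g: "?g \<in> iso G G" using iso_set_sym[OF f] .
  have hf: "f \<in> hom G G" using f by (auto simp: iso_def)
  have hg: "?g \<in> hom G G" using g by (auto simp: iso_def)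
  have inj: "inj_on f (carrier G)" using f by (auto simp: iso_def bij_betw_def)
  have sur: "f ` carrier G = carrier G" using f by (auto simp: iso_def bij_betw_def)
  have mapf: "f ` X \<in> rcosets ?C" if "X \<in> rcosets ?C" for X
    using that image_rcos[OF f] hom_in_carrier[OF hf] by (force simp: RCOSETS_def)
  have mapg: "?g ` X \<in> rcosets ?C" if "X \<in> rcosets ?C" for X
    using that image_rcos[OF g] hom_in_carrier[OF hg] by (force simp: RCOSETS_def)
  have hom: "(\<lambda>X. f ` X) \<in> hom (G Mod ?C) (G Mod ?C)"
  proof (rule homI)
    fix X assume "X \<in> carrier (G Mod ?C)" then show "f ` X \<in> carrier (G Mod ?C)"
      using mapf by (simp add: FactGroup_def)
  next
    fix X Y assume "X \<in> carrier (G Mod ?C)" "Y \<in> carrier (G Mod ?C)"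
    then obtain x y where xy: "x \<in> carrier G" "y \<in> carrier G" "X = ?C #> x" "Y = ?C #> y"
      by (auto simp: FactGroup_def RCOSETS_def)
    have "f ` (X <#> Y) = f ` (?C #> (x \<otimes> y))" using xy N.rcos_sum by simp
    also have "\<dots> = ?C #> (f x \<otimes> f y)" using image_rcos[OF f] xy hf by (simp add: hom_mult)
    also have "\<dots> = (?C #> f x) <#> (?C #> f y)"
      using N.rcos_sum hom_in_carrier[OF hf] xy by simp
    also have "\<dots> = f ` X <#> f ` Y" using image_rcos[OF f] xy by simp
    finally show "f ` (X \<otimes>\<^bsub>G Mod ?C\<^esub> Y) = f ` X \<otimes>\<^bsub>G Mod ?C\<^esub> f ` Y"
      by (simp add: FactGroup_def)
  qed
  have sub: "X \<subseteq> carrier G" if "X \<in> rcosets ?C" for X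
    using that N.subset by (auto simp: RCOSETS_def r_coset_def)
  have "bij_betw (\<lambda>X. f ` X) (rcosets ?C) (rcosets ?C)"
  proof (rule bij_betw_byWitness[where f' = "\<lambda>X. ?g ` X"])
    show "\<forall>X\<in>rcosets ?C. ?g ` f ` X = X" using sub inj by (simp add: inv_into_image_cancel)
    show "\<forall>X\<in>rcosets ?C. f ` ?g ` X = X" using sub sur by (simp add: image_inv_into_cancel)
    show "(\<lambda>X. f ` X) ` (rcosets ?C) \<subseteq> (rcosets ?C)" using mapf by auto
    show "(\<lambda>X. ?g ` X) ` (rcosets ?C) \<subseteq> (rcosets ?C)" using mapg by auto
  qed
  then show ?thesis using hom by (simp add: iso_def FactGroup_def)
qed



definition mulmap :: "nat \<Rightarrow> nat \<Rightarrow> nat set \<times> nat \<Rightarrow> nat set \<times> nat" where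
  "mulmap p k = (\<lambda>(u, a). ((\<lambda>i. k * i mod p) ` u, k * a mod p))"

lemma mul_inv_mod:
  fixes k k' p i :: nat
  assumes kk: "[k * k' = 1] (mod p)" and i: "i < p"
  shows "k' * (k * i mod p) mod p = i"
proof -
  have "k' * (k * i mod p) mod p = ((k * k') * i) mod p" by (simp add: mod_simps ac_simps)
  also have "\<dots> = ((k * k' mod p) * i) mod p" by (simp add: mod_simps)
  also have "\<dots> = ((1 mod p) * i) mod p" using kk by (simp add: cong_def)
  also have "\<dots> = i" using i by (cases "p = 1") auto
  finally show ?thesis .
qed

lemma mulmap_inv:
  assumes kk: "[k * k' = 1] (mod p)" and x: "x \<in> carrier (wreath p)"
  shows "mulmap p k' (mulmap p k x) = x"
proof -
  obtain u a where xa: "x = (u,a)" "u \<subseteq> {..<p}" "a < p" using x by (auto simp: wreath_carrier)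
  have "(\<lambda>i. k' * i mod p) ` (\<lambda>i. k * i mod p) ` u = u"
    unfolding image_image using xa(2) mul_inv_mod[OF kk] by (auto simp: image_iff subset_iff)
  then show ?thesis using xa mul_inv_mod[OF kk] by (simp add: mulmap_def)
qed

lemma mulmap_carrier:
  assumes "0 < p" "x \<in> carrier (wreath p)" shows "mulmap p k x \<in> carrier (wreath p)"
  using assms by (auto simp: wreath_carrier mulmap_def)

lemma mulmap_iso:
  assumes p: "0 < p" and kk: "[k * k' = 1] (mod p)"
  shows "mulmap p k \<in> iso (wreath p) (wreath p)"
proof -
  have kk': "[k' * k = 1] (mod p)" using kk by (simp add: ac_simps)
  have inj: "inj_on (\<lambda>i. k * i mod p) {..<p}"
    by (rule inj_on_inverseI[where g = "\<lambda>i. k' * i mod p"]) (use mul_inv_mod[OF kk] in auto)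
  have hom: "mulmap p k \<in> hom (wreath p) (wreath p)"
  proof (rule homI)
    fix x assume "x \<in> carrier (wreath p)" then show "mulmap p k x \<in> carrier (wreath p)"
      using mulmap_carrier p by blast
  next
    fix x y assume "x \<in> carrier (wreath p)" "y \<in> carrier (wreath p)"
    then obtain u a v b where xy: "x = (u,a)" "y = (v,b)" "u \<subseteq> {..<p}" "v \<subseteq> {..<p}"
      by (auto simp: wreath_carrier)
    have cs: "(\<lambda>i. k * i mod p) ` cshift p a v = cshift p (k * a mod p) ((\<lambda>i. k * i mod p) ` v)"
      unfolding cshift_def image_image
      by (rule image_cong) (auto simp: mod_simps algebra_simps)
    have "(\<lambda>i. k * i mod p) ` symdiff u (cshift p a v)
        = symdiff ((\<lambda>i. k * i mod p) ` u) ((\<lambda>i. k * i mod p) ` cshift p a v)"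
      using xy cshift_sub[OF p] by (intro symdiff_image[OF inj]) auto
    moreover have "k * ((a + b) mod p) mod p = (k * a mod p + k * b mod p) mod p"
      by (simp add: mod_simps algebra_simps)
    ultimately show "mulmap p k (x \<otimes>\<^bsub>wreath p\<^esub> y) = mulmap p k x \<otimes>\<^bsub>wreath p\<^esub> mulmap p k y"
      using cs by (simp add: xy wreath_mult mulmap_def)
  qed
  have "bij_betw (mulmap p k) (carrier (wreath p)) (carrier (wreath p))"
    by (rule bij_betw_byWitness[where f' = "mulmap p k'"])
      (use mulmap_inv[OF kk] mulmap_inv[OF kk'] mulmap_carrier[OF p] in auto)
  then show ?thesis using hom by (simp add: iso_def)
qed


lemma (in group) conj_iso:
  assumes h: "h \<in> carrier G"
  shows "(\<lambda>x. h \<otimes> x \<otimes> inv h) \<in> iso G G"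
proof -
  have c: "\<And>z. z \<in> carrier G \<Longrightarrow> inv h \<otimes> (h \<otimes> z) = z"
    "\<And>z. z \<in> carrier G \<Longrightarrow> h \<otimes> (inv h \<otimes> z) = z"
    using h by (simp_all add: m_assoc[symmetric])
  have hom: "(\<lambda>x. h \<otimes> x \<otimes> inv h) \<in> hom G G"
  proof (rule homI)
    fix x y assume xy: "x \<in> carrier G" "y \<in> carrier G"
    then show "h \<otimes> (x \<otimes> y) \<otimes> inv h = h \<otimes> x \<otimes> inv h \<otimes> (h \<otimes> y \<otimes> inv h)"
      using h by (simp add: m_assoc c)
  qed (use h in auto)
  have "bij_betw (\<lambda>x. h \<otimes> x \<otimes> inv h) (carrier G) (carrier G)"
    by (rule bij_betw_byWitness[where f' = "\<lambda>x. inv h \<otimes> x \<otimes> h"])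
      (use h in \<open>auto simp: m_assoc c\<close>)
  then show ?thesis using hom by (simp add: iso_def)
qed



lemma symdiff_swap: "symdiff (symdiff a b) (symdiff c d) = symdiff (symdiff a c) (symdiff b d)"
  by (auto simp: symdiff_def)

lemma solve_shift:
  assumes p: "1 < p" and t: "t \<subseteq> {..<p}"
  shows "\<exists>w \<subseteq> {..<p}. symdiff w (cshift p 1 w) = (if even (card t) then t else symdiff t {0})"
proof -
  have fin: "finite t" using t finite_subset by blast
  show ?thesis using fin t
  proof (induction t rule: finite_induct)
    case empty
    show ?case by (intro exI[of _ "{}"]) (simp add: cshift_def)
  next
    case (insert j t)
    then obtain w where w: "w \<subseteq> {..<p}" "symdiff w (cshift p 1 w) = (if even (card t) then t else symdiff t {0})"
      by auto
    have j: "j < p" using insert by auto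
    have cs: "cshift p 1 {..<j} = {1..j}"
    proof -
      have "cshift p 1 {..<j} = Suc ` {..<j}" unfolding cshift_def
        using j by (intro image_cong) auto
      then show ?thesis by (simp add: image_Suc_lessThan)
    qed
    have D: "symdiff {..<j} (cshift p 1 {..<j}) = symdiff {0} {j}"
      unfolding cs symdiff_def by auto
    let ?w = "symdiff w {..<j}"
    have "symdiff ?w (cshift p 1 ?w) = symdiff (symdiff w (cshift p 1 w)) (symdiff {..<j} (cshift p 1 {..<j}))"
    proof -
      have "cshift p 1 ?w = symdiff (cshift p 1 w) (cshift p 1 {..<j})"
        using w(1) j by (intro cshift_symdiff) auto
      then show ?thesis by (simp only: symdiff_swap)
    qed
    also have "\<dots> = (if even (card (insert j t)) then insert j t else symdiff (insert j t) {0})"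
    proof (cases "even (card t)")
      case True
      have ci: "card (insert j t) = Suc (card t)" using insert by simp
      have "symdiff t (symdiff {0} {j}) = symdiff (insert j t) {0}"
        using insert(2) by (auto simp: symdiff_mem)
      then show ?thesis unfolding D w(2) using True ci by simp
    next
      case False
      have ci: "card (insert j t) = Suc (card t)" using insert by simp
      have "symdiff (symdiff t {0}) (symdiff {0} {j}) = insert j t"
        using insert(2) by (auto simp: symdiff_mem)
      then show ?thesis unfolding D w(2) using False ci by simp
    qed
    finally have eq: "symdiff ?w (cshift p 1 ?w) = (if even (card (insert j t)) then insert j t else symdiff (insert j t) {0})" .
    have "?w \<subseteq> {..<p}" using w(1) j by (auto simp: symdiff_def)
    then show ?case using eq by blast
  qed
qed



lemma full_center:
  assumes p: "1 < p" shows "({..<p}, 0) \<in> center (wreath p)"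
proof -
  have "({..<p}, 0) \<otimes>\<^bsub>wreath p\<^esub> g = g \<otimes>\<^bsub>wreath p\<^esub> ({..<p}, 0)"
    if g: "g \<in> carrier (wreath p)" for g
  proof -
    obtain v b where vb: "g = (v,b)" "v \<subseteq> {..<p}" "b < p" using g by (auto simp: wreath_carrier)
    show ?thesis using vb p by (simp add: wreath_mult cshift_0 cshift_full symdiff_comm)
  qed
  then show ?thesis using p by (auto simp: center_def wreath_carrier)
qed

lemma conj_compute:
  assumes p: "1 < p" and w: "w \<subseteq> {..<p}" and s: "s \<subseteq> {..<p}"
  shows "(w, 0) \<otimes>\<^bsub>wreath p\<^esub> (s, 1) \<otimes>\<^bsub>wreath p\<^esub> inv\<^bsub>wreath p\<^esub> (w, 0)
       = (symdiff w (symdiff s (cshift p 1 w)), 1)"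
proof -
  interpret W: group "wreath p" using wreath_group p by simp
  have "inv\<^bsub>wreath p\<^esub> (w, 0) = (w, 0)"
    using w p by (intro W.inv_equality) (auto simp: wreath_mult wreath_one cshift_0 wreath_carrier)
  then show ?thesis using w s p by (simp add: wreath_mult cshift_0 symdiff_assoc)
qed



lemma lemmaB:
  assumes pr: "prime p" and od: "odd p" and g: "g \<in> carrier (wreath p)" and g0: "snd g \<noteq> 0"
  shows "\<exists>f \<in> iso (wreath p) (wreath p).
     center (wreath p) #>\<^bsub>wreath p\<^esub> f g = center (wreath p) #>\<^bsub>wreath p\<^esub> ({}, 1)"
proof -
  have p: "1 < p" using pr prime_gt_1_nat by blast
  interpret W: group "wreath p" using wreath_group p by simp
  interpret N: normal "center (wreath p)" "wreath p" by (rule W.center_normal)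
  obtain u a where ua: "g = (u,a)" "u \<subseteq> {..<p}" "a < p" "a \<noteq> 0" using g g0 by (auto simp: wreath_carrier)
  have "\<not> p dvd a" using ua by (auto dest: dvd_imp_le)
  then have "coprime p a" using pr by (simp add: prime_imp_coprime)
  then have "coprime a p" by (simp add: ac_simps)
  then obtain k where k: "[a * k = Suc 0] (mod p)" using cong_solve_coprime_nat by blast
  have kk: "[k * a = 1] (mod p)" using k by (simp add: ac_simps)
  have ka: "k * a mod p = 1" using kk p by (simp add: cong_def)
  define s where "s = (\<lambda>i. k * i mod p) ` u"
  have s: "s \<subseteq> {..<p}" using p by (auto simp: s_def)
  have m: "mulmap p k g = (s, 1)" using ua ka by (simp add: mulmap_def s_def)
  define t where "t = (if even (card s) then s else {..<p} - s)"
  have t: "t \<subseteq> {..<p}" using s by (auto simp: t_def)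
  have et: "even (card t)"
  proof (cases "even (card s)")
    case False
    have "card ({..<p} - s) = p - card s" using s by (simp add: card_Diff_subset finite_subset)
    moreover have "card s \<le> p" using s card_mono[of "{..<p}" s] by simp
    ultimately show ?thesis using False od by (simp add: t_def)
  qed (simp add: t_def)
  obtain w where w: "w \<subseteq> {..<p}" "symdiff w (cshift p 1 w) = t"
    using solve_shift[OF p t] et by auto
  define r where "r = symdiff w (symdiff s (cshift p 1 w))"
  have "r = symdiff s (symdiff w (cshift p 1 w))" unfolding r_def by (auto simp: symdiff_def)
  then have r: "r = symdiff s t" using w(2) by simp
  let ?h = "(w, 0) :: nat set \<times> nat"
  have h: "?h \<in> carrier (wreath p)" using w p by (simp add: wreath_carrier)
  let ?c = "\<lambda>x. ?h \<otimes>\<^bsub>wreath p\<^esub> x \<otimes>\<^bsub>wreath p\<^esub> inv\<^bsub>wreath p\<^esub> ?h"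
  have f: "?c \<circ> mulmap p k \<in> iso (wreath p) (wreath p)"
    using iso_set_trans[OF mulmap_iso[OF _ kk] W.conj_iso[OF h]] p by simp
  have "(?c \<circ> mulmap p k) g = ?c (s, 1)" using m by (simp only: comp_apply)
  also have "\<dots> = (r, 1)" unfolding r_def by (rule conj_compute[OF p w(1) s])
  finally have fg: "(?c \<circ> mulmap p k) g = (r, 1)" .
  have C: "center (wreath p) \<subseteq> carrier (wreath p)" by (rule N.subset)
  have e: "({}, 1) \<in> carrier (wreath p)" using p by (simp add: wreath_carrier)
  have "center (wreath p) #>\<^bsub>wreath p\<^esub> (r, 1) = center (wreath p) #>\<^bsub>wreath p\<^esub> ({}, 1)"
  proof (cases "even (card s)")
    case True
    then have "r = {}" using r by (simp add: t_def)
    then show ?thesis by simp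
  next
    case False
    then have "t = {..<p} - s" by (simp add: t_def)
    then have "r = {..<p}" using r s by (auto simp: symdiff_def)
    have fc: "({..<p}, 0) \<in> center (wreath p)" using full_center[OF p] .
    have fcc: "({..<p}, 0) \<in> carrier (wreath p)" using fc C by blast
    have "(r, 1) = ({..<p}, 0) \<otimes>\<^bsub>wreath p\<^esub> ({}, 1)"
      using \<open>r = {..<p}\<close> p by (simp add: wreath_mult cshift_def)
    then have "center (wreath p) #>\<^bsub>wreath p\<^esub> (r, 1)
        = center (wreath p) #>\<^bsub>wreath p\<^esub> (({..<p}, 0) \<otimes>\<^bsub>wreath p\<^esub> ({}, 1))" by simp
    also have "\<dots> = (center (wreath p) #>\<^bsub>wreath p\<^esub> ({..<p}, 0)) #>\<^bsub>wreath p\<^esub> ({}, 1)"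
      using W.coset_mult_assoc[OF C fcc e] by simp
    also have "center (wreath p) #>\<^bsub>wreath p\<^esub> ({..<p}, 0) = center (wreath p)"
      by (rule W.coset_join2[OF fcc N.subgroup_axioms fc])
    finally show ?thesis .
  qed
  then have "center (wreath p) #>\<^bsub>wreath p\<^esub> (?c \<circ> mulmap p k) g = center (wreath p) #>\<^bsub>wreath p\<^esub> ({}, 1)"
    by (simp only: fg)
  then show ?thesis using f by blast
qed



lemma Gq_carrier: "carrier (Gq p) = rcosets\<^bsub>wreath p\<^esub> (center (wreath p))"
  by (simp add: Gq_def FactGroup_def)

lemma to_c0:
  assumes pr: "prime p" and od: "odd p" and x: "x \<in> carrier (Gq p) - Vq p"
  shows "\<exists>\<phi> \<in> iso (Gq p) (Gq p). \<phi> x = center (wreath p) #>\<^bsub>wreath p\<^esub> ({}, 1)"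
proof -
  have p: "1 < p" using pr prime_gt_1_nat by blast
  interpret W: group "wreath p" using wreath_group p by simp
  obtain g where g: "g \<in> carrier (wreath p)" "x = center (wreath p) #>\<^bsub>wreath p\<^esub> g"
    using x by (auto simp: Gq_carrier RCOSETS_def)
  have g0: "snd g \<noteq> 0"
  proof
    assume "snd g = 0"
    then have "g \<in> Pow {..<p} \<times> {0}" using g by (cases g) (auto simp: wreath_carrier)
    then have "x \<in> Vq p" using g by (simp add: Vq_def)
    then show False using x by simp
  qed
  obtain f where f: "f \<in> iso (wreath p) (wreath p)"
    and fg: "center (wreath p) #>\<^bsub>wreath p\<^esub> f g = center (wreath p) #>\<^bsub>wreath p\<^esub> ({}, 1)"
    using lemmaB[OF pr od g(1) g0] by blast
  have "(\<lambda>X. f ` X) \<in> iso (Gq p) (Gq p)"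
    unfolding Gq_def by (rule W.quotient_iso[OF f])
  moreover have "f ` x = center (wreath p) #>\<^bsub>wreath p\<^esub> ({}, 1)"
    using W.image_rcos[OF f g(1)] g(2) fg by simp
  ultimately show ?thesis by blast
qed

theorem lemma2:
  fixes p :: nat
  assumes "prime p" and "odd p"
  shows "\<forall>x \<in> carrier (Gq p) - Vq p. \<forall>y \<in> carrier (Gq p) - Vq p.
           \<exists>\<phi> \<in> iso (Gq p) (Gq p). \<phi> x = y"
proof (intro ballI)
  fix x y assume x: "x \<in> carrier (Gq p) - Vq p" and y: "y \<in> carrier (Gq p) - Vq p"
  have p: "1 < p" using assms prime_gt_1_nat by blast
  interpret W: group "wreath p" using wreath_group p by simp
  interpret N: normal "center (wreath p)" "wreath p" by (rule W.center_normal)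
  interpret Q: group "Gq p" unfolding Gq_def by (rule N.factorgroup_is_group)
  let ?c = "center (wreath p) #>\<^bsub>wreath p\<^esub> ({}, 1)"
  obtain \<phi> where \<phi>: "\<phi> \<in> iso (Gq p) (Gq p)" "\<phi> x = ?c" using to_c0[OF assms x] by blast
  obtain \<psi> where \<psi>: "\<psi> \<in> iso (Gq p) (Gq p)" "\<psi> y = ?c" using to_c0[OF assms y] by blast
  let ?\<chi> = "inv_into (carrier (Gq p)) \<psi>"
  have \<chi>: "?\<chi> \<in> iso (Gq p) (Gq p)" by (rule Q.iso_set_sym[OF \<psi>(1)])
  have inj: "inj_on \<psi> (carrier (Gq p))" using \<psi>(1) by (auto simp: iso_def bij_betw_def)
  have "?\<chi> ?c = y" using inv_into_f_f[OF inj, of y] y \<psi>(2) by simp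
  then have "(?\<chi> \<circ> \<phi>) x = y" using \<phi>(2) by simp
  moreover have "?\<chi> \<circ> \<phi> \<in> iso (Gq p) (Gq p)" by (rule iso_set_trans[OF \<phi>(1) \<chi>])
  ultimately show "\<exists>\<phi> \<in> iso (Gq p) (Gq p). \<phi> x = y" by blast
qed


end
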